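(* Let $\Phi\in\mathbb R^{P\times N}$, $R$ proper lsc convex with $R_\infty(z)>0$ for all $z\in\ker(\Phi)\setminus\{0\}$, $\bar y\in\mathbb R^P$, and assume the solution set $\mathfrak D(0,\bar y)$ of $\mathcal D(0,\bar y)$ is nonempty. Let $(\lambda_k,y_k)$ be a sequence with $\lambda_k>0$ and $(\|y_k-\bar y\|/\lambda_k,\lambda_k)\to(0,0)$. Then $q^\star(\lambda_k,y_k)\to q^F(0,\bar y)$.
   Context: For $\lambda\ge0$, $y\in\mathbb R^P$, $\mathcal D(\lambda,y)$ is the problem $\max_{q\in\mathbb R^P}\langle q,y\rangle-\frac\lambda2\|q\|^2-R^*(\Phi^*q)$ (Fenchel–Rockafellar dual of $\min_x R(x)+\frac1{2\lambda}\|y-\Phi x\|^2$ for $\lambda>0$, resp. of $\min_x R(x)$ s.t. $\Phi x=y$ for $\lambda=0$), $R^*$ the Fenchel conjugate; $\mathfrak D(\lambda,y)$ is its solution set. For $\lambda>0$ it has a unique solution $q^\star(\lambda,y)$. $q^F(0,y)$ is the minimum-norm element of the closed convex set $\mathfrak D(0,y)$. $R_\infty$ is the recession function $R_\infty(z)=\lim_{t\to+\infty}(R(x+tz)-R(x))/t$, $x\in\mathrm{dom}R$. *)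

theory Defs
  imports "HOL-Analysis.Analysis"
begin

definition proper_fun :: "('a \<Rightarrow> ereal) \<Rightarrow> bool" where
  "proper_fun R \<longleftrightarrow> (\<forall>x. R x \<noteq> -\<infinity>) \<and> (\<exists>x. R x \<noteq> \<infinity>)"

definition lsc_fun :: "('a::topological_space \<Rightarrow> ereal) \<Rightarrow> bool" where
  "lsc_fun R \<longleftrightarrow> (\<forall>x. R x \<le> Liminf (at x) R)"

definition convex_fun :: "('a::real_vector \<Rightarrow> ereal) \<Rightarrow> bool" where
  "convex_fun R \<longleftrightarrow> (\<forall>x y (t::real). 0 \<le> t \<and> t \<le> 1 \<longrightarrow>
      R ((1 - t) *\<^sub>R x + t *\<^sub>R y) \<le> ereal (1 - t) * R x + ereal t * R y)"

definition dom_fun :: "('a \<Rightarrow> ereal) \<Rightarrow> 'a set" where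
  "dom_fun R = {x. R x < \<infinity>}"

definition fenchel_conj :: "('a::real_inner \<Rightarrow> ereal) \<Rightarrow> 'a \<Rightarrow> ereal" where
  "fenchel_conj R w = (SUP x. ereal (w \<bullet> x) - R x)"

text \<open>Recession function: limit of the difference quotients at a point of the domain
  (independent of the chosen point for proper lsc convex R).\<close>
definition recession_fun :: "('a::real_vector \<Rightarrow> ereal) \<Rightarrow> 'a \<Rightarrow> ereal" where
  "recession_fun R z =
     (let x0 = (SOME x. x \<in> dom_fun R) in
      Lim at_top (\<lambda>t::real. (R (x0 + t *\<^sub>R z) - R x0) / ereal t))"

definition dual_obj ::
  "real^'n^'p \<Rightarrow> (real^'n \<Rightarrow> ereal) \<Rightarrow> real \<Rightarrow> real^'p \<Rightarrow> real^'p \<Rightarrow> ereal" where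
  "dual_obj Phi R lam y q =
     ereal (q \<bullet> y - lam / 2 * (norm q)\<^sup>2) - fenchel_conj R (transpose Phi *v q)"

definition dual_sol ::
  "real^'n^'p \<Rightarrow> (real^'n \<Rightarrow> ereal) \<Rightarrow> real \<Rightarrow> real^'p \<Rightarrow> (real^'p) set" where
  "dual_sol Phi R lam y =
     {q. dual_obj Phi R lam y q \<noteq> -\<infinity> \<and> (\<forall>q'. dual_obj Phi R lam y q' \<le> dual_obj Phi R lam y q)}"

text \<open>q*(lambda,y): the unique solution for lambda > 0.\<close>
definition q_star :: "real^'n^'p \<Rightarrow> (real^'n \<Rightarrow> ereal) \<Rightarrow> real \<Rightarrow> real^'p \<Rightarrow> real^'p" where
  "q_star Phi R lam y = (THE q. q \<in> dual_sol Phi R lam y)"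

definition q_F :: "real^'n^'p \<Rightarrow> (real^'n \<Rightarrow> ereal) \<Rightarrow> real^'p \<Rightarrow> real^'p" where
  "q_F Phi R y = (THE q. q \<in> dual_sol Phi R 0 y \<and>
                        (\<forall>q'\<in>dual_sol Phi R 0 y. norm q \<le> norm q'))"

end

theory Submission imports Defs begin

lemma fc_upper: "R x = ereal r \<Longrightarrow> ereal (w \<bullet> x - r) \<le> fenchel_conj R w"
proof -
  assume h: "R x = ereal r"
  have "ereal (w \<bullet> x - r) = ereal (w \<bullet> x) - R x" using h by simp
  also have "\<dots> \<le> fenchel_conj R w" unfolding fenchel_conj_def by (rule SUP_upper) simp
  finally show ?thesis .
qed

lemma fc_le:
  assumes "proper_fun R" "\<And>x r. R x = ereal r \<Longrightarrow> w \<bullet> x - r \<le> c"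
  shows "fenchel_conj R w \<le> ereal c"
  unfolding fenchel_conj_def
proof (rule SUP_least)
  fix x show "ereal (w \<bullet> x) - R x \<le> ereal c"
  proof (cases "R x")
    case (real r) then show ?thesis using assms(2)[of x r] by simp
  next
    case PInf then show ?thesis by simp
  next
    case MInf then show ?thesis using assms(1) unfolding proper_fun_def by auto
  qed
qed

lemma fc_nm:
  assumes "proper_fun R" shows "fenchel_conj R w \<noteq> -\<infinity>"
proof -
  obtain x0 where "R x0 \<noteq> \<infinity>" "R x0 \<noteq> -\<infinity>" using assms unfolding proper_fun_def by auto
  then obtain r where "R x0 = ereal r" by (cases "R x0") auto
  from fc_upper[of R x0 r w, OF this] show ?thesis by auto
qed

definition FF :: "real^'n^'p \<Rightarrow> (real^'n \<Rightarrow> ereal) \<Rightarrow> real^'p \<Rightarrow> ereal" where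
  "FF Phi R q = fenchel_conj R (transpose Phi *v q)"
definition fin where "fin Phi R q \<longleftrightarrow> FF Phi R q \<noteq> \<infinity>"
definition Ff where "Ff Phi R q = real_of_ereal (FF Phi R q)"
definition vv where "vv Phi R lam y q = q \<bullet> y - lam / 2 * (norm q)\<^sup>2 - Ff Phi R q"

context
  fixes Phi :: "real^'n^'p" and R :: "real^'n \<Rightarrow> ereal"
  assumes proper: "proper_fun R"
begin

lemma FF_fin: "fin Phi R q \<Longrightarrow> FF Phi R q = ereal (Ff Phi R q)"
proof -
  assume "fin Phi R q"
  moreover have "FF Phi R q \<noteq> -\<infinity>" unfolding FF_def by (rule fc_nm[OF proper])
  ultimately show ?thesis unfolding fin_def Ff_def by (cases "FF Phi R q") auto
qed

lemma obj_fin: "fin Phi R q \<Longrightarrow> dual_obj Phi R lam y q = ereal (vv Phi R lam y q)"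
  using FF_fin[of q] unfolding dual_obj_def vv_def FF_def[symmetric] by simp

lemma obj_nfin: "\<not> fin Phi R q \<Longrightarrow> dual_obj Phi R lam y q = -\<infinity>"
  unfolding dual_obj_def fin_def FF_def by simp

lemma sol_iff: "q \<in> dual_sol Phi R lam y \<longleftrightarrow>
    fin Phi R q \<and> (\<forall>q'. fin Phi R q' \<longrightarrow> vv Phi R lam y q' \<le> vv Phi R lam y q)"
proof (cases "fin Phi R q")
  case True
  have eq: "dual_obj Phi R lam y q = ereal (vv Phi R lam y q)" using obj_fin[OF True] .
  have "(\<forall>q'. dual_obj Phi R lam y q' \<le> dual_obj Phi R lam y q) \<longleftrightarrow>
        (\<forall>q'. fin Phi R q' \<longrightarrow> vv Phi R lam y q' \<le> vv Phi R lam y q)"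
  proof (intro iffI allI impI)
    fix q' assume a: "\<forall>q'. dual_obj Phi R lam y q' \<le> dual_obj Phi R lam y q" "fin Phi R q'"
    have "dual_obj Phi R lam y q' \<le> dual_obj Phi R lam y q" using a(1) by blast
    then show "vv Phi R lam y q' \<le> vv Phi R lam y q" unfolding obj_fin[OF a(2)] eq by simp
  next
    fix q' assume a: "\<forall>q'. fin Phi R q' \<longrightarrow> vv Phi R lam y q' \<le> vv Phi R lam y q"
    show "dual_obj Phi R lam y q' \<le> dual_obj Phi R lam y q"
    proof (cases "fin Phi R q'")
      case True
      then have "vv Phi R lam y q' \<le> vv Phi R lam y q" using a by blast
      then show ?thesis unfolding obj_fin[OF True] eq by simp
    next
      case False then show ?thesis unfolding obj_nfin[OF False] by simp
    qed
  qed
  moreover have "dual_obj Phi R lam y q \<noteq> -\<infinity>" unfolding eq by simp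
  ultimately show ?thesis unfolding dual_sol_def mem_Collect_eq using True by blast
next
  case False
  have "dual_obj Phi R lam y q = -\<infinity>" using obj_nfin[OF False] .
  then show ?thesis unfolding dual_sol_def mem_Collect_eq using False by blast
qed

lemma Fle:
  assumes "\<And>x r. R x = ereal r \<Longrightarrow> q \<bullet> (Phi *v x) - r \<le> c"
  shows "fin Phi R q \<and> Ff Phi R q \<le> c"
proof -
  have "FF Phi R q \<le> ereal c" unfolding FF_def
  proof (rule fc_le[OF proper])
    fix x r assume "R x = ereal r"
    from assms[OF this] show "(transpose Phi *v q) \<bullet> x - r \<le> c" by (simp add: dot_lmul_matrix)
  qed
  moreover have "FF Phi R q \<noteq> \<infinity>" using calculation by auto
  ultimately show ?thesis using FF_fin[of q] unfolding fin_def by auto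
qed

lemma Fupper: "fin Phi R q \<Longrightarrow> R x = ereal r \<Longrightarrow> q \<bullet> (Phi *v x) - r \<le> Ff Phi R q"
  using fc_upper[of R x r "transpose Phi *v q"] FF_fin[of q]
  by (simp add: dot_lmul_matrix FF_def)


lemma norm_mid: "(norm ((1/2) *\<^sub>R (a + b)))\<^sup>2 = ((norm a)\<^sup>2 + (norm b)\<^sup>2) / 2 - (norm (a - b))\<^sup>2 / 4"
  for a b :: "'a::real_inner"
proof -
  have "(norm ((1/2) *\<^sub>R (a + b)))\<^sup>2 = (a \<bullet> a + 2 * (a \<bullet> b) + b \<bullet> b) / 4"
    unfolding power2_norm_eq_inner by (simp add: inner_add_left inner_add_right inner_commute field_simps)
  moreover have "(norm (a - b))\<^sup>2 = a \<bullet> a - 2 * (a \<bullet> b) + b \<bullet> b"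
    by (simp add: power2_norm_eq_inner inner_diff inner_commute algebra_simps)
  moreover have "(norm a)\<^sup>2 = a \<bullet> a" "(norm b)\<^sup>2 = b \<bullet> b" by (simp_all add: power2_norm_eq_inner)
  ultimately show ?thesis by argo
qed

lemma mid:
  assumes "fin Phi R a" "fin Phi R b"
  shows "fin Phi R ((1/2) *\<^sub>R (a + b)) \<and> Ff Phi R ((1/2) *\<^sub>R (a + b)) \<le> (Ff Phi R a + Ff Phi R b) / 2"
proof (rule Fle)
  fix x r assume h: "R x = ereal r"
  have "((1/2) *\<^sub>R (a + b)) \<bullet> (Phi *v x) - r = ((a \<bullet> (Phi *v x) - r) + (b \<bullet> (Phi *v x) - r)) / 2"
    by (simp add: inner_add_left algebra_simps)
  also have "\<dots> \<le> (Ff Phi R a + Ff Phi R b) / 2"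
    using Fupper[OF assms(1) h] Fupper[OF assms(2) h] by simp
  finally show "((1/2) *\<^sub>R (a + b)) \<bullet> (Phi *v x) - r \<le> (Ff Phi R a + Ff Phi R b) / 2" .
qed

lemma vv_mid:
  assumes "fin Phi R a" "fin Phi R b" "lam \<ge> 0"
  shows "vv Phi R lam y ((1/2) *\<^sub>R (a + b)) \<ge>
     (vv Phi R lam y a + vv Phi R lam y b) / 2 + lam / 8 * (norm (a - b))\<^sup>2"
proof -
  have F: "Ff Phi R ((1/2) *\<^sub>R (a + b)) \<le> (Ff Phi R a + Ff Phi R b) / 2" using mid[OF assms(1,2)] by blast
  have y: "((1/2) *\<^sub>R (a + b)) \<bullet> y = (a \<bullet> y + b \<bullet> y) / 2" by (simp add: inner_add_left)
  have e: "lam/2 * (((norm a)\<^sup>2 + (norm b)\<^sup>2)/2 - (norm(a-b))\<^sup>2/4) =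
     lam/4*(norm a)\<^sup>2 + lam/4*(norm b)\<^sup>2 - lam/8*(norm(a-b))\<^sup>2" by (simp add: algebra_simps)
  define na where "na = lam*(norm a)\<^sup>2"
  define nb where "nb = lam*(norm b)\<^sup>2"
  define nd where "nd = lam*(norm (a-b))\<^sup>2"
  have e2: "lam/2*(norm a)\<^sup>2 = na/2" "lam/2*(norm b)\<^sup>2 = nb/2" "lam/4*(norm a)\<^sup>2 = na/4"
    "lam/4*(norm b)\<^sup>2 = nb/4" "lam/8*(norm (a-b))\<^sup>2 = nd/8"
    unfolding na_def nb_def nd_def by simp_all
  show ?thesis unfolding vv_def y norm_mid e e2 using F by argo
qed

lemma closure_Ff:
  assumes "X \<longlonglongrightarrow> q0" "c \<longlonglongrightarrow> c0" "\<forall>j. fin Phi R (X j) \<and> Ff Phi R (X j) \<le> c j"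
  shows "fin Phi R q0 \<and> Ff Phi R q0 \<le> c0"
proof (rule Fle)
  fix x r assume h: "R x = ereal r"
  have t: "(\<lambda>j. X j \<bullet> (Phi *v x) - r) \<longlonglongrightarrow> q0 \<bullet> (Phi *v x) - r"
    by (intro tendsto_intros assms(1))
  show "q0 \<bullet> (Phi *v x) - r \<le> c0"
  proof (rule LIMSEQ_le[OF t assms(2)])
    show "\<exists>N. \<forall>n\<ge>N. X n \<bullet> (Phi *v x) - r \<le> c n"
      using Fupper[OF _ h] assms(3) by (meson order_trans)
  qed
qed

lemma uniq_pos:
  assumes "lam > 0" "a \<in> dual_sol Phi R lam y" "b \<in> dual_sol Phi R lam y"
  shows "a = b"
proof -
  from assms(2,3) have fa: "fin Phi R a" and fb: "fin Phi R b"
    and ab: "vv Phi R lam y b \<le> vv Phi R lam y a" and ba: "vv Phi R lam y a \<le> vv Phi R lam y b"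
    and m: "vv Phi R lam y ((1/2) *\<^sub>R (a + b)) \<le> vv Phi R lam y a"
    using mid[of a b] unfolding sol_iff by blast+
  have "vv Phi R lam y ((1/2) *\<^sub>R (a + b)) \<ge> vv Phi R lam y a + lam / 8 * (norm (a - b))\<^sup>2"
    using vv_mid[OF fa fb, of lam y] assms(1) ab ba by simp
  with m have "lam / 8 * (norm (a - b))\<^sup>2 \<le> 0" by simp
  with assms(1) have "(norm (a - b))\<^sup>2 \<le> 0" by (simp add: mult_le_0_iff)
  then show ?thesis by simp
qed

lemma uniq_minnorm:
  assumes "a \<in> dual_sol Phi R 0 y" "\<forall>q'\<in>dual_sol Phi R 0 y. norm a \<le> norm q'"
    "b \<in> dual_sol Phi R 0 y" "\<forall>q'\<in>dual_sol Phi R 0 y. norm b \<le> norm q'"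
  shows "a = b"
proof -
  have nab: "norm a = norm b" using assms by force
  from assms(1,3) have fa: "fin Phi R a" and fb: "fin Phi R b"
    and ab: "vv Phi R 0 y b \<le> vv Phi R 0 y a" and ba: "vv Phi R 0 y a \<le> vv Phi R 0 y b"
    and opt: "\<forall>q'. fin Phi R q' \<longrightarrow> vv Phi R 0 y q' \<le> vv Phi R 0 y a"
    unfolding sol_iff by blast+
  let ?m = "(1/2) *\<^sub>R (a + b)"
  have fm: "fin Phi R ?m" using mid[OF fa fb] by blast
  have "vv Phi R 0 y ?m \<ge> vv Phi R 0 y a" using vv_mid[OF fa fb, of 0 y] ab ba by simp
  then have "?m \<in> dual_sol Phi R 0 y" unfolding sol_iff using fm opt by force
  then have "norm a \<le> norm ?m" using assms(2) by blast
  then have "(norm a)\<^sup>2 \<le> (norm ?m)\<^sup>2" by (simp add: power_mono)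
  then have "(norm (a - b))\<^sup>2 \<le> 0" unfolding norm_mid nab by simp
  then show ?thesis by simp
qed


lemma vv_bound:
  assumes "lam > 0"
  shows "\<exists>B. \<forall>q. fin Phi R q \<longrightarrow> vv Phi R lam y q \<le> B"
proof -
  obtain x0 where "R x0 \<noteq> \<infinity>" "R x0 \<noteq> -\<infinity>" using proper unfolding proper_fun_def by auto
  then obtain r0 where h: "R x0 = ereal r0" by (cases "R x0") auto
  define v where "v = y - Phi *v x0"
  show ?thesis
  proof (intro exI allI impI)
    fix q assume fq: "fin Phi R q"
    have "q \<bullet> (Phi *v x0) - r0 \<le> Ff Phi R q" using Fupper[OF fq h] .
    then have "vv Phi R lam y q \<le> q \<bullet> v - lam / 2 * (norm q)\<^sup>2 + r0"
      unfolding vv_def v_def by (simp add: inner_diff_right)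
    also have "q \<bullet> v \<le> norm q * norm v" by (rule norm_cauchy_schwarz)
    moreover have "norm q * norm v - lam / 2 * (norm q)\<^sup>2 \<le> (norm v)\<^sup>2 / (2 * lam)"
    proof -
      have "0 \<le> (norm v - lam * norm q)\<^sup>2 / (2 * lam)" using assms by simp
      also have "(norm v - lam * norm q)\<^sup>2 / (2 * lam) =
          (norm v)\<^sup>2 / (2 * lam) - (norm q * norm v - lam / 2 * (norm q)\<^sup>2)"
        using assms by (simp add: field_simps power2_eq_square)
      finally show ?thesis by simp
    qed
    ultimately show "vv Phi R lam y q \<le> (norm v)\<^sup>2 / (2 * lam) + r0" by argo
  qed
qed

lemma exists_pos:
  assumes "lam > 0" "fin Phi R p"
  shows "\<exists>q. q \<in> dual_sol Phi R lam y"
proof -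
  let ?S = "vv Phi R lam y ` {q. fin Phi R q}"
  obtain B where B: "\<forall>q. fin Phi R q \<longrightarrow> vv Phi R lam y q \<le> B" using vv_bound[OF assms(1)] by blast
  have bdd: "bdd_above ?S" using B by (auto intro!: bdd_aboveI)
  have ne: "?S \<noteq> {}" using assms(2) by auto
  define M where "M = Sup ?S"
  have upper: "\<And>q. fin Phi R q \<Longrightarrow> vv Phi R lam y q \<le> M"
    unfolding M_def using bdd by (auto intro!: cSup_upper)
  have "\<forall>j. \<exists>q. fin Phi R q \<and> M - inverse (real (Suc j)) < vv Phi R lam y q"
  proof
    fix j :: nat
    have "M - inverse (real (Suc j)) < Sup ?S" unfolding M_def by simp
    then show "\<exists>q. fin Phi R q \<and> M - inverse (real (Suc j)) < vv Phi R lam y q"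
      using less_cSup_iff[OF ne bdd] by auto
  qed
  then obtain X where X: "\<And>j. fin Phi R (X j)" "\<And>j. M - inverse (real (Suc j)) < vv Phi R lam y (X j)"
    by metis
  have key: "lam / 8 * (norm (X i - X j))\<^sup>2 < inverse (real (Suc N))"
    if "i \<ge> N" "j \<ge> N" for i j N
  proof -
    have m: "vv Phi R lam y ((1/2) *\<^sub>R (X i + X j)) \<le> M"
      using upper mid[OF X(1) X(1)] by blast
    have v: "vv Phi R lam y ((1/2) *\<^sub>R (X i + X j)) \<ge>
       (vv Phi R lam y (X i) + vv Phi R lam y (X j)) / 2 + lam / 8 * (norm (X i - X j))\<^sup>2"
      using vv_mid[OF X(1) X(1)] assms(1) by simp
    have "inverse (real (Suc i)) \<le> inverse (real (Suc N))" "inverse (real (Suc j)) \<le> inverse (real (Suc N))"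
      using that by (simp_all add: le_imp_inverse_le)
    then show ?thesis using m v X(2)[of i] X(2)[of j] by argo
  qed
  have "Cauchy X"
  proof (rule CauchyI)
    fix e :: real assume e: "e > 0"
    obtain N :: nat where N: "8 / (lam * e\<^sup>2) < real N" using reals_Archimedean2 by blast
    have Npos: "0 < lam * e\<^sup>2" using e assms(1) by simp
    have "inverse (real (Suc N)) < lam * e\<^sup>2 / 8"
    proof -
      have "8 / (lam * e\<^sup>2) < real (Suc N)" using N by simp
      then have "8 < real (Suc N) * (lam * e\<^sup>2)" using Npos by (simp add: divide_less_eq)
      then show ?thesis by (simp add: field_simps)
    qed
    show "\<exists>M. \<forall>m\<ge>M. \<forall>n\<ge>M. norm (X m - X n) < e"
    proof (intro exI allI impI)
      fix m n assume "N \<le> m" "N \<le> n"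
      from key[OF this] \<open>inverse (real (Suc N)) < lam * e\<^sup>2 / 8\<close>
      have "lam / 8 * (norm (X m - X n))\<^sup>2 < lam * e\<^sup>2 / 8" by simp
      then have "(norm (X m - X n))\<^sup>2 < e\<^sup>2" using assms(1) by (simp add: field_simps)
      then show "norm (X m - X n) < e" using e by (simp add: power_less_imp_less_base)
    qed
  qed
  then obtain q0 where q0: "X \<longlonglongrightarrow> q0" unfolding Cauchy_convergent_iff convergent_def by blast
  define c where "c j = X j \<bullet> y - lam / 2 * (norm (X j))\<^sup>2 - (M - inverse (real (Suc j)))" for j
  have c: "c \<longlonglongrightarrow> q0 \<bullet> y - lam / 2 * (norm q0)\<^sup>2 - (M - 0)"
    unfolding c_def by (intro tendsto_intros q0 LIMSEQ_inverse_real_of_nat)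
  have "\<forall>j. fin Phi R (X j) \<and> Ff Phi R (X j) \<le> c j"
  proof
    fix j show "fin Phi R (X j) \<and> Ff Phi R (X j) \<le> c j"
      using X(1)[of j] X(2)[of j] unfolding c_def vv_def by argo
  qed
  from closure_Ff[OF q0 c this] have f0: "fin Phi R q0"
    and f1: "Ff Phi R q0 \<le> q0 \<bullet> y - lam / 2 * (norm q0)\<^sup>2 - (M - 0)" by auto
  have "M \<le> vv Phi R lam y q0" using f1 unfolding vv_def by simp
  then have "q0 \<in> dual_sol Phi R lam y" unfolding sol_iff using f0 upper by force
  then show ?thesis by blast
qed

end

lemma quad_bound:
  fixes t K a :: real
  assumes "0 \<le> t" "0 \<le> K" "0 \<le> a" "t\<^sup>2 \<le> a + 2 * K * t"
  shows "t \<le> 2 * K + 1 + a"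
proof (rule ccontr)
  assume "\<not> ?thesis"
  then have h: "t > 2 * K + 1 + a" by simp
  then have "t * t \<ge> t * (2 * K + 1 + a)" using assms by (intro mult_left_mono) auto
  moreover have "t * (2 * K + 1 + a) = 2 * K * t + t + a * t" by (simp add: algebra_simps)
  moreover have "a * t \<ge> 0" using assms by simp
  ultimately have "t\<^sup>2 \<ge> 2 * K * t + t" by (simp add: power2_eq_square)
  with h assms show False by argo
qed

lemma q_star_sol:
  assumes "proper_fun R" "lam > 0" "fin Phi R p"
  shows "q_star Phi R lam y \<in> dual_sol Phi R lam y"
proof -
  obtain q where q: "q \<in> dual_sol Phi R lam y" using exists_pos[OF assms] by blast
  show ?thesis unfolding q_star_def
  proof (rule theI[of _ q])
    show "q \<in> dual_sol Phi R lam y" by (rule q)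
    fix x assume "x \<in> dual_sol Phi R lam y" then show "x = q" using uniq_pos[OF assms(1,2)] q by blast
  qed
qed

lemma key_ineq:
  assumes "proper_fun R" "lam > 0" "q \<in> dual_sol Phi R lam y" "p \<in> dual_sol Phi R 0 ybar"
  shows "(norm q)\<^sup>2 \<le> (norm p)\<^sup>2 + 2 * (norm (y - ybar) / lam) * norm (q - p)"
proof -
  have fq: "fin Phi R q" and fp: "fin Phi R p" using assms(3,4) sol_iff[OF assms(1)] by blast+
  have A: "vv Phi R lam y p \<le> vv Phi R lam y q" using assms(3) fp sol_iff[OF assms(1)] by blast
  have B: "vv Phi R 0 ybar q \<le> vv Phi R 0 ybar p" using assms(4) fq sol_iff[OF assms(1)] by blast
  have "(q - p) \<bullet> (y - ybar) = q \<bullet> y - q \<bullet> ybar - p \<bullet> y + p \<bullet> ybar"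
    by (simp add: inner_diff_left inner_diff_right)
  then have C: "lam / 2 * ((norm q)\<^sup>2 - (norm p)\<^sup>2) \<le> (q - p) \<bullet> (y - ybar)"
    using A B unfolding vv_def right_diff_distrib by argo
  also have "\<dots> \<le> norm (q - p) * norm (y - ybar)" by (rule norm_cauchy_schwarz)
  also have "\<dots> = lam / 2 * (2 * (norm (y - ybar) / lam) * norm (q - p))" using assms(2) by simp
  finally have fin1: "lam / 2 * ((norm q)\<^sup>2 - (norm p)\<^sup>2) \<le> lam / 2 * (2 * (norm (y - ybar) / lam) * norm (q - p))" .
  then have "(norm q)\<^sup>2 - (norm p)\<^sup>2 \<le> 2 * (norm (y - ybar) / lam) * norm (q - p)"
  proof -
    have c: "0 < lam / 2" using assms(2) by simp
    show ?thesis using mult_le_cancel_left_pos[OF c] fin1 by blast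
  qed
  then show ?thesis by argo
qed

theorem lemma4p2:
  fixes Phi :: "real^'n^'p" and R :: "real^'n \<Rightarrow> ereal"
    and ybar :: "real^'p" and lam :: "nat \<Rightarrow> real" and y :: "nat \<Rightarrow> real^'p"
  assumes "proper_fun R" and "lsc_fun R" and "convex_fun R"
    and "\<forall>z. Phi *v z = 0 \<and> z \<noteq> 0 \<longrightarrow> recession_fun R z > 0"
    and "dual_sol Phi R 0 ybar \<noteq> {}"
    and "\<forall>k. lam k > 0"
    and "(\<lambda>k. norm (y k - ybar) / lam k) \<longlonglongrightarrow> 0"
    and "lam \<longlonglongrightarrow> 0"
  shows "(\<lambda>k. q_star Phi R (lam k) (y k)) \<longlonglongrightarrow> q_F Phi R ybar"
proof (rule ccontr)
  note pr = assms(1)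
  define Q where "Q = dual_sol Phi R 0 ybar"
  obtain p where pQ: "p \<in> Q" using assms(5) unfolding Q_def by blast
  have fp: "fin Phi R p" using pQ sol_iff[OF pr] unfolding Q_def by blast
  define qs where "qs k = q_star Phi R (lam k) (y k)" for k
  define e where "e k = norm (y k - ybar) / lam k" for k
  have sol: "qs k \<in> dual_sol Phi R (lam k) (y k)" for k
    unfolding qs_def using q_star_sol[OF pr _ fp] assms(6) by blast
  have ineq: "(norm (qs k))\<^sup>2 \<le> (norm p')\<^sup>2 + 2 * e k * norm (qs k - p')" if "p' \<in> Q" for k p'
    unfolding e_def using key_ineq[OF pr _ sol[of k], of p'] that assms(6) unfolding Q_def by blast
  have e0: "e \<longlonglongrightarrow> 0" using assms(7) unfolding e_def .
  have epos: "e k \<ge> 0" for k unfolding e_def using assms(6) by (simp add: less_imp_le)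
  obtain K where K: "K > 0" "\<And>k. norm (e k) \<le> K"
    using convergent_imp_Bseq[of e] e0 unfolding convergent_def by (meson BseqE)
  have bnd: "norm (qs k) \<le> 2 * K + 1 + ((norm p)\<^sup>2 + 2 * K * norm p)" for k
  proof (rule quad_bound)
    have "e k \<le> K" using K(2)[of k] by simp
    have "(norm (qs k))\<^sup>2 \<le> (norm p)\<^sup>2 + 2 * e k * norm (qs k - p)" using ineq[OF pQ] .
    also have "\<dots> \<le> (norm p)\<^sup>2 + 2 * K * (norm (qs k) + norm p)"
      using \<open>e k \<le> K\<close> epos[of k] norm_triangle_ineq4[of "qs k" p]
      by (intro add_left_mono mult_mono) auto
    finally show "(norm (qs k))\<^sup>2 \<le> ((norm p)\<^sup>2 + 2 * K * norm p) + 2 * K * norm (qs k)"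
      by (simp add: algebra_simps)
  qed (use K in auto)
  have bounded: "bounded (range qs)" unfolding bounded_iff using bnd by blast
  assume nconv: "\<not> (\<lambda>k. q_star Phi R (lam k) (y k)) \<longlonglongrightarrow> q_F Phi R ybar"
  then obtain eps where eps: "eps > 0" "\<not> (\<exists>N. \<forall>n\<ge>N. dist (qs n) (q_F Phi R ybar) < eps)"
    unfolding qs_def[symmetric] LIMSEQ_def by blast
  have "infinite {n. eps \<le> dist (qs n) (q_F Phi R ybar)}"
    unfolding infinite_nat_iff_unbounded_le
  proof
    fix m
    from eps(2) obtain n where "n \<ge> m" "\<not> dist (qs n) (q_F Phi R ybar) < eps" by blast
    then show "\<exists>n\<ge>m. n \<in> {n. eps \<le> dist (qs n) (q_F Phi R ybar)}" by force
  qed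
  then obtain r :: "nat \<Rightarrow> nat" where r: "strict_mono r" "\<And>n. eps \<le> dist (qs (r n)) (q_F Phi R ybar)"
    using infinite_enumerate by blast
  have "range (qs \<circ> r) \<subseteq> range qs" by (auto simp only: image_comp[symmetric] image_mono subset_UNIV)
  then have "bounded (range (qs \<circ> r))" using bounded bounded_subset by blast
  then obtain l s where s: "strict_mono (s :: nat \<Rightarrow> nat)" "((qs \<circ> r) \<circ> s) \<longlonglongrightarrow> l"
    using bounded_imp_convergent_subsequence by blast
  define t where "t = r \<circ> s"
  have t: "strict_mono t" unfolding t_def using r(1) s(1) by (rule strict_mono_o)
  have qt: "(\<lambda>j. qs (t j)) \<longlonglongrightarrow> l" using s(2) unfolding t_def comp_def .
  have et: "(\<lambda>j. e (t j)) \<longlonglongrightarrow> 0" using LIMSEQ_subseq_LIMSEQ[OF e0 t] unfolding comp_def .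
  have lt: "(\<lambda>j. lam (t j)) \<longlonglongrightarrow> 0" using LIMSEQ_subseq_LIMSEQ[OF assms(8) t] unfolding comp_def .
  have ny: "norm (y k - ybar) = e k * lam k" for k
  proof -
    have "lam k \<noteq> 0" using assms(6) by (metis less_irrefl)
    then show ?thesis unfolding e_def by simp
  qed
  have "(\<lambda>k. e k * lam k) \<longlonglongrightarrow> 0 * 0" by (rule tendsto_mult[OF e0 assms(8)])
  then have "(\<lambda>k. norm (y k - ybar)) \<longlonglongrightarrow> 0" unfolding ny by simp
  then have "(\<lambda>k. y k - ybar) \<longlonglongrightarrow> 0" by (simp only: tendsto_norm_zero_iff)
  then have "y \<longlonglongrightarrow> ybar" by (rule LIM_zero_cancel)
  then have yt: "(\<lambda>j. y (t j)) \<longlonglongrightarrow> ybar" using LIMSEQ_subseq_LIMSEQ[OF _ t] unfolding comp_def by blast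
  have opt: "fin Phi R l \<and> Ff Phi R l \<le> l \<bullet> ybar - (q' \<bullet> ybar - Ff Phi R q')" if fq': "fin Phi R q'" for q'
  proof -
    define c where "c j = qs (t j) \<bullet> y (t j) - lam (t j) / 2 * (norm (qs (t j)))\<^sup>2
       - (q' \<bullet> y (t j) - lam (t j) / 2 * (norm q')\<^sup>2 - Ff Phi R q')" for j
    have c: "c \<longlonglongrightarrow> l \<bullet> ybar - 0 / 2 * (norm l)\<^sup>2 - (q' \<bullet> ybar - 0 / 2 * (norm q')\<^sup>2 - Ff Phi R q')"
      unfolding c_def by (intro tendsto_intros qt yt lt) simp_all
    have "\<forall>j. fin Phi R (qs (t j)) \<and> Ff Phi R (qs (t j)) \<le> c j"
    proof
      fix j
      have f: "fin Phi R (qs (t j))" and o: "vv Phi R (lam (t j)) (y (t j)) q' \<le> vv Phi R (lam (t j)) (y (t j)) (qs (t j))"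
        using sol[of "t j"] fq' sol_iff[OF pr] by blast+
      show "fin Phi R (qs (t j)) \<and> Ff Phi R (qs (t j)) \<le> c j" using f o unfolding c_def vv_def by argo
    qed
    from closure_Ff[OF pr qt c this] show ?thesis by simp
  qed
  have fl: "fin Phi R l" using opt[OF fp] by blast
  have lQ: "l \<in> Q" unfolding Q_def sol_iff[OF pr]
  proof (intro conjI allI impI fl)
    fix q' assume "fin Phi R q'"
    from opt[OF this] show "vv Phi R 0 ybar q' \<le> vv Phi R 0 ybar l" unfolding vv_def by argo
  qed
  have lmin: "norm l \<le> norm p'" if "p' \<in> Q" for p'
  proof -
    have A: "(\<lambda>j. (norm (qs (t j)))\<^sup>2) \<longlonglongrightarrow> (norm l)\<^sup>2" by (rule tendsto_power[OF tendsto_norm[OF qt]])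
    have B: "(\<lambda>j. (norm p')\<^sup>2 + 2 * e (t j) * norm (qs (t j) - p')) \<longlonglongrightarrow> (norm p')\<^sup>2 + 2 * 0 * norm (l - p')"
      by (rule tendsto_add[OF tendsto_const tendsto_mult[OF tendsto_mult[OF tendsto_const et] tendsto_norm[OF tendsto_diff[OF qt tendsto_const]]]])
    have "(norm l)\<^sup>2 \<le> (norm p')\<^sup>2 + 2 * 0 * norm (l - p')"
      by (rule LIMSEQ_le[OF A B]) (use ineq[OF that] in blast)
    then have "(norm l)\<^sup>2 \<le> (norm p')\<^sup>2" by simp
    then show ?thesis by (rule power2_le_imp_le) simp
  qed
  have qF: "q_F Phi R ybar = l" unfolding q_F_def
  proof (rule the_equality)
    show "l \<in> dual_sol Phi R 0 ybar \<and> (\<forall>q'\<in>dual_sol Phi R 0 ybar. norm l \<le> norm q')"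
      using lQ lmin unfolding Q_def by blast
    fix q assume "q \<in> dual_sol Phi R 0 ybar \<and> (\<forall>q'\<in>dual_sol Phi R 0 ybar. norm q \<le> norm q')"
    then show "q = l" using uniq_minnorm[OF pr] lQ lmin unfolding Q_def by blast
  qed
  have D: "(\<lambda>j. dist (qs (t j)) (q_F Phi R ybar)) \<longlonglongrightarrow> dist l (q_F Phi R ybar)"
    by (rule tendsto_dist[OF qt tendsto_const])
  have "eps \<le> dist l (q_F Phi R ybar)"
    by (rule LIMSEQ_le_const[OF D]) (use r(2) in \<open>auto simp: t_def\<close>)
  then show False using qF eps(1) by simp
qed

end
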